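(* Let $G$ be a finite group, $\xi$ a linear character of $G$, $\varepsilon$ the trivial or sign character of $S_2$, and $\xi\otimes\varepsilon$ the linear character $(g,g;\sigma)\mapsto\xi(g)\varepsilon(\sigma)$ of $HG_1=\{(g,g;\sigma)\mid g\in G,\sigma\in S_2\}\subset SG_2=G\wr S_2$. For $z\in SG_2$ put $K_z=\sum_{x,y\in HG_1}(\xi\otimes\varepsilon)(xy)\,xzy\in\mathbb{C}SG_2$. Then for $g\in G$ and $\sigma\in S_2$, $K_{(1,g;\sigma)}=0$ if and only if $\xi(g)=-1$ and $C_g=C_{g^{-1}}$.
   Context: $G\wr S_2=\{(g_1,g_2;\sigma)\}$ with multiplication $(g_1,g_2;\sigma)(h_1,h_2;\tau)=(g_1h_{\sigma^{-1}(1)},g_2h_{\sigma^{-1}(2)};\sigma\tau)$. $C_g$ denotes the conjugacy class of $g$ in $G$. *)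

theory Defs
  imports Complex_Main "HOL-Algebra.Group"
begin

(* Elements of the wreath product G wr S_2 are triples (g1, g2, s), where the
   permutation s :: bool encodes an element of S_2: False = identity, True = swap. *)

definition wr_carrier :: "('a, 'b) monoid_scheme \<Rightarrow> ('a \<times> 'a \<times> bool) set" where
  "wr_carrier G = carrier G \<times> carrier G \<times> (UNIV :: bool set)"

(* (g1,g2;s)(h1,h2;t) = (g1 h_{s^-1(1)}, g2 h_{s^-1(2)}; s t) *)
definition wr_mult :: "('a, 'b) monoid_scheme \<Rightarrow> 'a \<times> 'a \<times> bool \<Rightarrow> 'a \<times> 'a \<times> bool \<Rightarrow> 'a \<times> 'a \<times> bool" where
  "wr_mult G x y = (case x of (g1, g2, s) \<Rightarrow> case y of (h1, h2, t) \<Rightarrow>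
     (if s then (g1 \<otimes>\<^bsub>G\<^esub> h2, g2 \<otimes>\<^bsub>G\<^esub> h1, s \<noteq> t)
           else (g1 \<otimes>\<^bsub>G\<^esub> h1, g2 \<otimes>\<^bsub>G\<^esub> h2, t)))"

definition HG1 :: "('a, 'b) monoid_scheme \<Rightarrow> ('a \<times> 'a \<times> bool) set" where
  "HG1 G = {(g, g, s) | g s. g \<in> carrier G}"

definition tens_char :: "('a \<Rightarrow> complex) \<Rightarrow> (bool \<Rightarrow> complex) \<Rightarrow> 'a \<times> 'a \<times> bool \<Rightarrow> complex" where
  "tens_char xi eps x = xi (fst x) * eps (snd (snd x))"

(* K_z = \<Sum>_{x,y \<in> HG_1} (xi (x) eps)(xy) xzy  as an element of the group algebra C[SG_2],
   represented by its coefficient function SG_2 \<rightarrow> C. *)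
definition K_elem :: "('a, 'b) monoid_scheme \<Rightarrow> ('a \<Rightarrow> complex) \<Rightarrow> (bool \<Rightarrow> complex)
    \<Rightarrow> 'a \<times> 'a \<times> bool \<Rightarrow> ('a \<times> 'a \<times> bool \<Rightarrow> complex)" where
  "K_elem G xi eps z = (\<lambda>w. \<Sum>p \<in> HG1 G \<times> HG1 G.
      if wr_mult G (wr_mult G (fst p) z) (snd p) = w
      then tens_char xi eps (wr_mult G (fst p) (snd p)) else 0)"

definition conj_class :: "('a, 'b) monoid_scheme \<Rightarrow> 'a \<Rightarrow> 'a set" where
  "conj_class G g = {h \<otimes>\<^bsub>G\<^esub> g \<otimes>\<^bsub>G\<^esub> inv\<^bsub>G\<^esub> h | h. h \<in> carrier G}"

definition linear_char :: "('a, 'b) monoid_scheme \<Rightarrow> ('a \<Rightarrow> complex) \<Rightarrow> bool" where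
  "linear_char G xi \<longleftrightarrow> (\<forall>x\<in>carrier G. xi x \<noteq> 0) \<and>
     (\<forall>x\<in>carrier G. \<forall>y\<in>carrier G. xi (x \<otimes>\<^bsub>G\<^esub> y) = xi x * xi y)"

end

theory Submission
  imports Defs
begin

lemma conj_from:
  fixes G (structure)
  assumes G: "group G" and a: "a \<in> carrier G" and b: "b \<in> carrier G" and g: "g \<in> carrier G"
    and e1: "a \<otimes>\<^bsub>G\<^esub> b = g" and e2: "a \<otimes>\<^bsub>G\<^esub> g \<otimes>\<^bsub>G\<^esub> b = \<one>\<^bsub>G\<^esub>"
  shows "conj_class G g = conj_class G (inv\<^bsub>G\<^esub> g)"
proof -
  interpret group G by fact
  have bb: "b = inv a \<otimes> g" using e1 a b g
    by (metis inv_solve_left)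
  have k: "a \<otimes> g \<otimes> inv a = inv g"
    using e2 unfolding bb using a g
    by (metis inv_closed inv_equality m_assoc m_closed)
  have k2: "inv a \<otimes> inv g \<otimes> a = g"
    using k a g by (metis inv_closed inv_solve_left m_assoc m_closed r_inv r_one)
  show ?thesis
  proof
    show "conj_class G g \<subseteq> conj_class G (inv g)"
    proof
      fix x assume "x \<in> conj_class G g"
      then obtain h where h: "h \<in> carrier G" "x = h \<otimes> g \<otimes> inv h" unfolding conj_class_def by auto
      have "x = h \<otimes> (inv a \<otimes> inv g \<otimes> a) \<otimes> inv h" using h k2 by simp
      also have "\<dots> = (h \<otimes> inv a) \<otimes> inv g \<otimes> inv (h \<otimes> inv a)"
        using h a g by (simp add: m_assoc inv_mult_group)
      finally have "x = (h \<otimes> inv a) \<otimes> inv g \<otimes> inv (h \<otimes> inv a)" .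
      then show "x \<in> conj_class G (inv g)" unfolding conj_class_def using h a by blast
    qed
    show "conj_class G (inv g) \<subseteq> conj_class G g"
    proof
      fix x assume "x \<in> conj_class G (inv g)"
      then obtain h where h: "h \<in> carrier G" "x = h \<otimes> inv g \<otimes> inv h" unfolding conj_class_def by auto
      have "x = h \<otimes> (a \<otimes> g \<otimes> inv a) \<otimes> inv h" using h k by simp
      also have "\<dots> = (h \<otimes> a) \<otimes> g \<otimes> inv (h \<otimes> a)"
        using h a g by (simp add: m_assoc inv_mult_group)
      finally have "x = (h \<otimes> a) \<otimes> g \<otimes> inv (h \<otimes> a)" .
      then show "x \<in> conj_class G g" unfolding conj_class_def using h a by blast
    qed
  qed
qed

lemma conj_to:
  fixes G (structure)
  assumes G: "group G" and g: "g \<in> carrier G"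
    and c: "conj_class G g = conj_class G (inv\<^bsub>G\<^esub> g)"
  shows "\<exists>a\<in>carrier G. \<exists>b\<in>carrier G. a \<otimes>\<^bsub>G\<^esub> b = g \<and> a \<otimes>\<^bsub>G\<^esub> g \<otimes>\<^bsub>G\<^esub> b = \<one>\<^bsub>G\<^esub>"
proof -
  interpret group G by fact
  have "g \<in> conj_class G g" unfolding conj_class_def using g
    by (auto intro!: exI[of _ \<one>])
  then obtain h where h: "h \<in> carrier G" "g = h \<otimes> inv g \<otimes> inv h"
    using c unfolding conj_class_def by auto
  have "inv g = inv (h \<otimes> inv g \<otimes> inv h)" using h(2) by (rule arg_cong)
  also have "\<dots> = h \<otimes> g \<otimes> inv h" using h(1) g by (simp add: inv_mult_group m_assoc)
  finally have k: "inv g = h \<otimes> g \<otimes> inv h" .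
  show ?thesis
  proof (intro bexI conjI)
    show "h \<otimes> (inv h \<otimes> g) = g" using h g by (simp add: m_assoc[symmetric])
    show "h \<otimes> g \<otimes> (inv h \<otimes> g) = \<one>" using h g k
      by (metis inv_closed l_inv m_assoc m_closed)
  qed (use h g in auto)
qed

lemma calc1:
  fixes G (structure)
  shows "wr_mult G (wr_mult G (a,a,\<sigma>) (\<one>,g,s)) (b,b,\<tau>) =
    (if \<sigma> then a \<otimes> g \<otimes> b else a \<otimes> \<one> \<otimes> b, if \<sigma> then a \<otimes> \<one> \<otimes> b else a \<otimes> g \<otimes> b, (\<sigma> \<noteq> s) \<noteq> \<tau>)"
  by (cases \<sigma>; cases s; cases \<tau>) (simp_all add: wr_mult_def)

lemma calc2:
  fixes G (structure)
  shows "wr_mult G (a,a,\<sigma>) (b,b,\<tau>) = (a \<otimes> b, a \<otimes> b, \<sigma> \<noteq> \<tau>)"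
  by (cases \<sigma>; cases \<tau>) (simp_all add: wr_mult_def)

lemma HG1_finite: "finite (carrier G) \<Longrightarrow> finite (HG1 G)"
proof -
  assume f: "finite (carrier G)"
  have "HG1 G = (\<lambda>(g,s). (g,g,s)) ` (carrier G \<times> UNIV)" unfolding HG1_def by auto
  then show ?thesis using f by simp
qed

lemma main_aux:
  fixes G (structure) and xi :: "'a \<Rightarrow> complex" and eps :: "bool \<Rightarrow> complex"
    and g :: 'a and s :: bool
  assumes "group G" and "finite (carrier G)"
    and "linear_char G xi"
    and "eps = (\<lambda>_. 1) \<or> eps = (\<lambda>t. if t then -1 else 1)"
    and "g \<in> carrier G"
  shows "K_elem G xi eps (\<one>\<^bsub>G\<^esub>, g, s) = (\<lambda>_. 0) \<longleftrightarrow>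
           (xi g = -1 \<and> conj_class G g = conj_class G (inv\<^bsub>G\<^esub> g))"
proof -
  interpret group G by fact
  note gG = assms(5)
  have xim: "\<And>x y. x \<in> carrier G \<Longrightarrow> y \<in> carrier G \<Longrightarrow> xi (x \<otimes> y) = xi x * xi y"
    and xinz: "\<And>x. x \<in> carrier G \<Longrightarrow> xi x \<noteq> 0"
    using assms(3) unfolding linear_char_def by auto
  have xi1: "xi \<one> = 1"
  proof -
    have "xi \<one> = xi \<one> * xi \<one>" using xim[of \<one> \<one>] by simp
    then show ?thesis using xinz[of \<one>] by simp
  qed
  have epsF: "eps False = 1" using assms(4) by auto
  define z where "z = (\<one>, g, s)"
  define A where "A = HG1 G \<times> HG1 G"
  define F where "F w p = (if wr_mult G (wr_mult G (fst p) z) (snd p) = w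
      then tens_char xi eps (wr_mult G (fst p) (snd p)) else 0)" for w p
  have finA: "finite A" unfolding A_def using HG1_finite[OF assms(2)] by simp
  have Kiff: "K_elem G xi eps z = (\<lambda>_. 0) \<longleftrightarrow> (\<forall>w. sum (F w) A = 0)"
    unfolding K_elem_def F_def A_def fun_eq_iff by simp
  have Fval: "F w ((a,a,\<sigma>),(b,b,\<tau>)) = (if (if \<sigma> then a \<otimes> g \<otimes> b else a \<otimes> b, if \<sigma> then a \<otimes> b else a \<otimes> g \<otimes> b, (\<sigma> \<noteq> s) \<noteq> \<tau>) = w
     then xi (a \<otimes> b) * eps (\<sigma> \<noteq> \<tau>) else 0)"
    if "a \<in> carrier G" "b \<in> carrier G" for a b \<sigma> \<tau> w
    unfolding F_def z_def using that gG by (simp add: calc1 calc2 tens_char_def)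
  show ?thesis
    unfolding z_def[symmetric] Kiff
  proof
    assume H: "\<forall>w. sum (F w) A = 0"
    show "xi g = -1 \<and> conj_class G g = conj_class G (inv g)"
    proof (rule ccontr)
      assume nH: "\<not> (xi g = -1 \<and> conj_class G g = conj_class G (inv g))"
      have p0: "((\<one>,\<one>,False),(\<one>,\<one>,False)) \<in> A" unfolding A_def HG1_def by auto
      have F0: "F z ((\<one>,\<one>,False),(\<one>,\<one>,False)) = 1"
        using Fval[where a="\<one>" and b="\<one>" and \<sigma>=False and \<tau>=False and w=z] gG xi1 epsF by (simp add: z_def)
      have F01: "F z p = 0 \<or> F z p = 1" if pA: "p \<in> A" for p
      proof -
        obtain a b \<sigma> \<tau> where p: "p = ((a,a,\<sigma>),(b,b,\<tau>))" and ab: "a \<in> carrier G" "b \<in> carrier G"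
          using pA unfolding A_def HG1_def by auto
        show ?thesis
        proof (cases "(if \<sigma> then a \<otimes> g \<otimes> b else a \<otimes> b, if \<sigma> then a \<otimes> b else a \<otimes> g \<otimes> b, (\<sigma> \<noteq> s) \<noteq> \<tau>) = z")
          case False then show ?thesis using Fval[OF ab, where \<sigma>=\<sigma> and \<tau>=\<tau> and w=z] p by simp
        next
          case True
          show ?thesis
          proof (cases \<sigma>)
            case T: True
            with True have e1: "a \<otimes> b = g" and e2: "a \<otimes> g \<otimes> b = \<one>" and t: "\<tau>"
              by (auto simp: z_def)
            have cc: "conj_class G g = conj_class G (inv g)"
              using conj_from[OF assms(1) ab gG e1 e2] .
            have "xi a * xi g * xi b = 1" using e2 xim ab gG xi1 by (metis m_closed)
            moreover have "xi a * xi b = xi g" using e1 xim ab by metis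
            ultimately have "xi g * xi g = 1" by (metis mult.assoc mult.commute)
            then have "(xi g - 1) * (xi g + 1) = 0" by (simp add: algebra_simps)
            then have "xi g = 1 \<or> xi g = -1" by (auto simp: add_eq_0_iff neg_equal_iff_equal) (metis minus_minus)
            then have "xi g = 1" using nH cc by auto
            then show ?thesis using Fval[OF ab, where \<sigma>=\<sigma> and \<tau>=\<tau> and w=z] p True T t e1 epsF by simp
          next
            case Fa: False
            with True have e1: "a \<otimes> b = \<one>" and t: "\<not>\<tau>"
              by (auto simp: z_def)
            then show ?thesis using Fval[OF ab, where \<sigma>=\<sigma> and \<tau>=\<tau> and w=z] p True Fa e1 epsF xi1 by simp
          qed
        qed
      qed
      have "Re (F z ((\<one>,\<one>,False),(\<one>,\<one>,False))) \<le> (\<Sum>p\<in>A. Re (F z p))"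
        by (rule member_le_sum[OF p0 _ finA]) (use F01 in fastforce)
      then have "1 \<le> Re (sum (F z) A)" using F0 by (simp add: Re_sum)
      then show False using H by auto
    qed
  next
    assume H: "xi g = -1 \<and> conj_class G g = conj_class G (inv g)"
    then obtain a0 b0 where ab0: "a0 \<in> carrier G" "b0 \<in> carrier G"
      and e1: "a0 \<otimes> b0 = g" and e2: "a0 \<otimes> g \<otimes> b0 = \<one>"
      using conj_to[OF assms(1) gG] by blast
    define \<phi> :: "('a \<times> 'a \<times> bool) \<times> ('a \<times> 'a \<times> bool) \<Rightarrow> _" where "\<phi> p = (case p of ((a,_,\<sigma>),(b,_,\<tau>)) \<Rightarrow>
        ((a \<otimes> a0, a \<otimes> a0, \<not>\<sigma>), (b0 \<otimes> b, b0 \<otimes> b, \<not>\<tau>)))" for p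
    have img: "\<phi> ` A \<subseteq> A" unfolding A_def HG1_def \<phi>_def using ab0 by auto
    have inj: "inj_on \<phi> A"
    proof
      fix p q assume "p \<in> A" "q \<in> A" "\<phi> p = \<phi> q"
      then show "p = q" unfolding A_def HG1_def \<phi>_def using ab0
        by auto
    qed
    have imgA: "\<phi> ` A = A" using endo_inj_surj[OF finA img inj] .
    show "\<forall>w. sum (F w) A = 0"
    proof
      fix w
      have neg: "F w (\<phi> p) = - F w p" if pA: "p \<in> A" for p
      proof -
        obtain a b \<sigma> \<tau> where p: "p = ((a,a,\<sigma>),(b,b,\<tau>))" and ab: "a \<in> carrier G" "b \<in> carrier G"
          using pA unfolding A_def HG1_def by auto
        have ph: "\<phi> ((a,a,\<sigma>),(b,b,\<tau>)) = ((a \<otimes> a0, a \<otimes> a0, \<not>\<sigma>), (b0 \<otimes> b, b0 \<otimes> b, \<not>\<tau>))"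
          unfolding \<phi>_def by simp
        have X: "a \<otimes> a0 \<otimes> g \<otimes> (b0 \<otimes> b) = a \<otimes> b"
          using ab ab0 gG e2 by (metis m_assoc m_closed r_one)
        have Y: "a \<otimes> a0 \<otimes> (b0 \<otimes> b) = a \<otimes> g \<otimes> b"
          using ab ab0 gG e1 by (metis m_assoc m_closed)
        have W: "xi (a \<otimes> g \<otimes> b) = - xi (a \<otimes> b)"
          using xim ab gG H by (simp add: m_closed)
        show ?thesis
          unfolding p ph using ab ab0 X Y W by (cases s; cases \<tau>) (simp_all add: Fval)
      qed
      have "sum (F w) A = sum (F w) (\<phi> ` A)" using imgA by simp
      also have "\<dots> = sum (F w \<circ> \<phi>) A" by (rule sum.reindex[OF inj])
      also have "\<dots> = sum (\<lambda>p. - F w p) A" using neg by (auto intro: sum.cong)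
      also have "\<dots> = - sum (F w) A" by (simp add: sum_negf)
      finally show "sum (F w) A = 0" by simp
    qed
  qed
qed

theorem proposition3p6:
  fixes G :: "('a, 'b) monoid_scheme" and xi :: "'a \<Rightarrow> complex" and eps :: "bool \<Rightarrow> complex"
    and g :: 'a and s :: bool
  assumes "group G" and "finite (carrier G)"
    and "linear_char G xi"
    and "eps = (\<lambda>_. 1) \<or> eps = (\<lambda>t. if t then -1 else 1)"
    and "g \<in> carrier G"
  shows "K_elem G xi eps (\<one>\<^bsub>G\<^esub>, g, s) = (\<lambda>_. 0) \<longleftrightarrow>
           (xi g = -1 \<and> conj_class G g = conj_class G (inv\<^bsub>G\<^esub> g))"
  using main_aux[OF assms] .

end
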